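(* The function $\Phi:[0,+\infty)\to\mathbb R$ is continuous on $[0,+\infty)$.
   Context: Let $V(x)=(x^2/2-1)^2$, $x_+(E)=\sqrt{2+2\sqrt E}$ for $E\ge0$, $x_-(E)=\sqrt{2-2\sqrt E}$ for $E\in[0,1]$ and $x_-(E)=0$ for $E\ge1$. For $E\in(0,1)\cup(1,\infty)$ set $C(E)=\left(\int_{x_-(E)}^{x_+(E)}(E-V(x))^{-1/2}dx\right)^{-1}$ and $F(E)=\int_{x_-(E)}^{x_+(E)}\frac{2-x^2}{\sqrt{E-V(x)}}dx$. Define $\Phi(0)=0$, $\Phi(1)=2$, and $\Phi(E)=C(E)F(E)$ for $E\in(0,1)\cup(1,\infty)$. *)

theory Defs
  imports "HOL-Analysis.Analysis"
begin

definition V :: "real \<Rightarrow> real" where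
  "V x = (x^2 / 2 - 1)^2"

definition xplus :: "real \<Rightarrow> real" where
  "xplus E = sqrt (2 + 2 * sqrt E)"

definition xminus :: "real \<Rightarrow> real" where
  "xminus E = (if E \<le> 1 then sqrt (2 - 2 * sqrt E) else 0)"

text \<open>The integrals are (improper) integrals over the interval between the turning
points; the integrands are absolutely integrable, so the Henstock-Kurzweil integral
over the closed interval coincides with the improper Riemann/Lebesgue integral
(the endpoint values are irrelevant).\<close>

definition Cfun :: "real \<Rightarrow> real" where
  "Cfun E = inverse (integral {xminus E..xplus E} (\<lambda>x. 1 / sqrt (E - V x)))"

definition Ffun :: "real \<Rightarrow> real" where
  "Ffun E = integral {xminus E..xplus E} (\<lambda>x. (2 - x^2) / sqrt (E - V x))"

definition Phi :: "real \<Rightarrow> real" where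
  "Phi E = (if E = 0 then 0 else if E = 1 then 2 else Cfun E * Ffun E)"

end

theory Submission
  imports Defs "HOL-Real_Asymp.Real_Asymp"
begin

lemma subst_HK:
  fixes f g g' p :: "real \<Rightarrow> real"
  assumes Mf: "f \<in> borel_measurable borel" and f0: "\<And>x. x \<in> {g a..g b} \<Longrightarrow> f x \<ge> 0"
    and derivg: "\<And>x. x \<in> {a..b} \<Longrightarrow> (g has_real_derivative g' x) (at x)"
    and contg': "continuous_on {a..b} g'"
    and g'0: "\<And>x. x \<in> {a..b} \<Longrightarrow> g' x \<ge> 0"
    and ab: "a \<le> b"
    and contp: "continuous_on {a..b} p"
    and p0: "\<And>x. x \<in> {a..b} \<Longrightarrow> p x \<ge> 0"
    and eq: "\<And>x. x \<in> {a<..<b} \<Longrightarrow> f (g x) * g' x = p x"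
  shows "(f has_integral integral {a..b} p) {g a..g b}"
proof -
  define r where "r = integral {a..b} p"
  have hp: "(p has_integral r) {a..b}"
    unfolding r_def using contp by (intro integrable_integral integrable_continuous_interval)
  have r0: "r \<ge> 0" using hp p0 by (metis has_integral_nonneg)
  have N1: "(\<integral>\<^sup>+x. ennreal (p x) * indicator {a..b} x \<partial>lborel) = ennreal r"
    by (rule nn_integral_has_integral_lebesgue'[OF p0 hp]) auto
  have Mf': "set_borel_measurable borel {g a..g b} f"
    using Mf unfolding set_borel_measurable_def by measurable
  note S = nn_integral_substitution[OF Mf' derivg contg' g'0 ab]
  have "(\<integral>\<^sup>+x. f (g x) * g' x * indicator {a..b} x \<partial>lborel)
      = (\<integral>\<^sup>+x. ennreal (p x) * indicator {a..b} x \<partial>lborel)"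
  proof (rule nn_integral_cong_AE)
    show "AE x in lborel. ennreal (f (g x) * g' x * indicator {a..b} x) = ennreal (p x) * indicator {a..b} x"
      using AE_lborel_singleton[of a] AE_lborel_singleton[of b]
    proof eventually_elim
      case (elim x)
      then show ?case using eq[of x] by (auto split: split_indicator)
    qed
  qed
  with S N1 have N2: "(\<integral>\<^sup>+x. ennreal (f x * indicator {g a..g b} x) \<partial>lborel) = ennreal r"
    by simp
  have "((\<lambda>x. f x * indicator {g a..g b} x) has_integral r) UNIV"
    by (rule nn_integral_has_integral[OF _ _ N2 r0]) (use Mf f0 in \<open>auto split: split_indicator\<close>)
  then have "((\<lambda>x. if x \<in> {g a..g b} then f x else 0) has_integral r) UNIV"
    by (rule has_integral_eq[rotated]) (auto split: split_indicator)
  then show ?thesis unfolding r_def[symmetric] has_integral_restrict_UNIV .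
qed

definition Jl :: "real \<Rightarrow> real" where
  "Jl s = integral {-pi/2..pi/2} (\<lambda>t. 1 / sqrt (2 + 2 * s * sin t))"
definition Kl :: "real \<Rightarrow> real" where
  "Kl s = integral {-pi/2..pi/2} (\<lambda>t. sqrt (2 + 2 * s * sin t))"

lemma V_meas[measurable]: "V \<in> borel_measurable borel"
  unfolding V_def by measurable

lemma left_subst_common:
  fixes E s t :: real
  assumes E: "0 < E" "E < 1" and s: "s = sqrt E" and t: "t \<in> {-pi/2<..<pi/2}"
  shows "sqrt (E - V (sqrt (2 + 2 * s * sin t))) = s * cos t"
    and "2 + 2 * s * sin t > 0"
proof -
  have s01: "0 < s" "s < 1" using E s by auto
  have "\<bar>sin t\<bar> \<le> 1" by (rule abs_sin_le_one)
  then have "s * sin t > -1" using s01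
    by (smt (verit, best) abs_le_iff mult_left_le mult_minus_right)
  then show pos: "2 + 2 * s * sin t > 0" by linarith
  have c: "cos t > 0" using t by (auto intro!: cos_gt_zero_pi)
  have "V (sqrt (2 + 2 * s * sin t)) = (s * sin t)^2"
    unfolding V_def using pos by (simp add: add_divide_distrib)
  moreover have "E = s^2" using E s by simp
  ultimately have "E - V (sqrt (2 + 2 * s * sin t)) = (s * cos t)^2"
    by (simp add: power_mult_distrib cos_squared_eq algebra_simps)
  then show "sqrt (E - V (sqrt (2 + 2 * s * sin t))) = s * cos t"
    using c s01 by simp
qed

lemma V_le:
  fixes E x :: real
  assumes E: "0 \<le> E" and x: "x \<in> {xminus E..xplus E}"
  shows "V x \<le> E"
proof -
  define s where "s = sqrt E"
  have s0: "s \<ge> 0" "s^2 = E" using E s_def by auto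
  have xm0: "xminus E \<ge> 0" unfolding xminus_def by auto
  then have x0: "x \<ge> 0" using x by auto
  have "x^2 \<le> (xplus E)^2" using x x0 by (intro power_mono) auto
  also have "(xplus E)^2 = 2 + 2 * s" unfolding xplus_def s_def using E by simp
  finally have up: "x^2/2 - 1 \<le> s" by simp
  have low: "x^2/2 - 1 \<ge> -s"
  proof (cases "E \<le> 1")
    case True
    have "(xminus E)^2 \<le> x^2" using x xm0 by (intro power_mono) auto
    moreover have "(xminus E)^2 = 2 - 2 * s" unfolding xminus_def s_def using E True by simp
    ultimately show ?thesis by simp
  next
    case False
    then have "s \<ge> 1" unfolding s_def by simp
    moreover have "x^2 \<ge> 0" by simp
    ultimately show ?thesis by linarith
  qed
  have "(x^2/2 - 1)^2 \<le> s^2"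
  proof -
    have "\<bar>x^2/2 - 1\<bar> \<le> s" using up low by linarith
    then have "\<bar>x^2/2 - 1\<bar>^2 \<le> s^2" by (intro power_mono) auto
    then show ?thesis by simp
  qed
  then show ?thesis unfolding V_def using s0 by simp
qed

lemma left_case:
  fixes E :: real
  assumes E: "0 < E" "E < 1"
  shows "((\<lambda>x. 1 / sqrt (E - V x)) has_integral Jl (sqrt E)) {xminus E..xplus E}"
    and "((\<lambda>x. x^2 / sqrt (E - V x)) has_integral Kl (sqrt E)) {xminus E..xplus E}"
proof -
  define s where "s = sqrt E"
  have s01: "0 < s" "s < 1" using E s_def by auto
  define g where "g t = sqrt (2 + 2 * s * sin t)" for t
  define g' where "g' t = s * cos t / sqrt (2 + 2 * s * sin t)" for t
  have pos: "2 + 2 * s * sin t > 0" for t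
  proof -
    have "\<bar>sin t\<bar> \<le> 1" by (rule abs_sin_le_one)
    then have "s * sin t > -1" using s01
      by (smt (verit, best) abs_le_iff mult_left_le mult_minus_right)
    then show ?thesis by linarith
  qed
  have derivg: "(g has_real_derivative g' t) (at t)" for t
    unfolding g_def g'_def
    using pos[of t]
    by (auto intro!: derivative_eq_intros simp: field_simps)
  have contg': "continuous_on {-pi/2..pi/2} g'"
    unfolding g'_def using pos by (intro continuous_intros) (auto simp: less_imp_neq[symmetric] intro: less_imp_neq)
  have g'0: "g' t \<ge> 0" if "t \<in> {-pi/2..pi/2}" for t
    unfolding g'_def using that s01 pos[of t] by (auto intro!: divide_nonneg_pos mult_nonneg_nonneg cos_ge_zero)
  have ga: "g (-pi/2) = xminus E" unfolding g_def xminus_def s_def using E by simp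
  have gb: "g (pi/2) = xplus E" unfolding g_def xplus_def s_def using E by simp
  have ab: "-pi/2 \<le> pi/2" by simp
  have eqc: "sqrt (E - V (g t)) = s * cos t" if "t \<in> {-pi/2<..<pi/2}" for t
    unfolding g_def by (rule left_subst_common(1)[OF E s_def that])
  have cpos: "cos t > 0" if "t \<in> {-pi/2<..<pi/2}" for t
    using that by (auto intro!: cos_gt_zero_pi)
  show "((\<lambda>x. 1 / sqrt (E - V x)) has_integral Jl (sqrt E)) {xminus E..xplus E}"
    unfolding Jl_def s_def[symmetric] ga[symmetric] gb[symmetric]
  proof (rule subst_HK[where g'=g'])
    show "(\<lambda>x. 1 / sqrt (E - V x)) \<in> borel_measurable borel" by measurable
    show "continuous_on {- pi / 2..pi / 2} (\<lambda>t. 1 / sqrt (2 + 2 * s * sin t))"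
      using pos by (intro continuous_intros) (auto, metis less_irrefl)
    fix t :: real assume t: "t \<in> {-pi/2<..<pi/2}"
    show "1 / sqrt (E - V (g t)) * g' t = 1 / sqrt (2 + 2 * s * sin t)"
      using eqc[OF t] cpos[OF t] s01 unfolding g'_def by (simp add: field_simps)
  qed (use derivg contg' g'0 pos[THEN less_imp_le] V_le[of E] E in \<open>auto simp: ga[simplified] gb[simplified]\<close>)
  show "((\<lambda>x. x^2 / sqrt (E - V x)) has_integral Kl (sqrt E)) {xminus E..xplus E}"
    unfolding Kl_def s_def[symmetric] ga[symmetric] gb[symmetric]
  proof (rule subst_HK[where g'=g'])
    show "(\<lambda>x. x^2 / sqrt (E - V x)) \<in> borel_measurable borel" by measurable
    show "continuous_on {- pi / 2..pi / 2} (\<lambda>t. sqrt (2 + 2 * s * sin t))"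
      by (intro continuous_intros)
    fix t :: real assume t: "t \<in> {-pi/2<..<pi/2}"
    show "(g t)^2 / sqrt (E - V (g t)) * g' t = sqrt (2 + 2 * s * sin t)"
      using eqc[OF t] cpos[OF t] s01 pos[of t] unfolding g'_def g_def
      by (simp add: field_simps real_sqrt_pow2 power2_eq_square)
  qed (use derivg contg' g'0 pos[THEN less_imp_le] V_le[of E] E in \<open>auto simp: ga[simplified] gb[simplified]\<close>)
qed

definition wr :: "real \<Rightarrow> real \<Rightarrow> real" where
  "wr s t = s - 1 + (1 + s) * (sin t)^2"
definition Jr :: "real \<Rightarrow> real" where
  "Jr s = integral {0..pi/2} (\<lambda>t. sqrt 2 / sqrt (wr s t))"
definition Kr :: "real \<Rightarrow> real" where
  "Kr s = integral {0..pi/2} (\<lambda>t. (2 + 2 * s) * (sin t)^2 * sqrt 2 / sqrt (wr s t))"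

lemma wr_pos: "s > 1 \<Longrightarrow> wr s t > 0"
  unfolding wr_def by (smt (verit) mult_nonneg_nonneg zero_le_power2)

lemma right_case:
  fixes E :: real
  assumes E: "1 < E"
  shows "((\<lambda>x. 1 / sqrt (E - V x)) has_integral Jr (sqrt E)) {xminus E..xplus E}"
    and "((\<lambda>x. x^2 / sqrt (E - V x)) has_integral Kr (sqrt E)) {xminus E..xplus E}"
proof -
  define s where "s = sqrt E"
  have s1: "1 < s" using E s_def by auto
  have Es: "E = s^2" using E s_def by simp
  define xp where "xp = xplus E"
  have xp: "xp = sqrt 2 * sqrt (1 + s)" unfolding xp_def xplus_def s_def
    by (simp add: real_sqrt_mult[symmetric] algebra_simps)
  have xp2: "xp^2 = 2 + 2 * s" unfolding xp using s1 by (simp add: power_mult_distrib)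
  define g where "g t = xp * sin t" for t
  define g' where "g' t = xp * cos t" for t
  have derivg: "(g has_real_derivative g' t) (at t)" for t
    unfolding g_def g'_def by (auto intro!: derivative_eq_intros)
  have contg': "continuous_on {0..pi/2} g'"
    unfolding g'_def by (intro continuous_intros)
  have xp0: "xp > 0" unfolding xp using s1 by simp
  have g'0: "g' t \<ge> 0" if "t \<in> {0..pi/2}" for t
    unfolding g'_def using that xp0 by (auto intro!: mult_nonneg_nonneg cos_ge_zero)
  have ga: "g 0 = xminus E" unfolding g_def xminus_def using E by simp
  have gb: "g (pi/2) = xplus E" unfolding g_def xp_def by simp
  have ab: "0 \<le> pi/2" by simp
  have eqc: "sqrt (E - V (g t)) = sqrt (1 + s) * cos t * sqrt (wr s t)" if "t \<in> {0<..<pi/2}" for t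
  proof -
    have c: "cos t > 0" using that by (auto intro!: cos_gt_zero_pi)
    have "E - V (g t) = (1 + s) * (cos t)^2 * wr s t"
    proof -
      have "(g t)^2 / 2 - 1 = (1 + s) * (sin t)^2 - 1"
        unfolding g_def power_mult_distrib xp2 by simp
      then have "V (g t) = ((1 + s) * (sin t)^2 - 1)^2" unfolding V_def by simp
      moreover have "(cos t)^2 = 1 - (sin t)^2" by (simp add: cos_squared_eq)
      moreover have "\<And>S. s^2 - ((1+s)*S - 1)^2 = (1+s)*(1-S)*(s-1+(1+s)*S)"
        by (simp add: power2_eq_square algebra_simps)
      ultimately show ?thesis unfolding Es wr_def by simp
    qed
    also have "\<dots> = (sqrt (1 + s) * cos t * sqrt (wr s t))^2"
      using s1 wr_pos[OF s1, of t] by (simp add: power_mult_distrib)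
    finally show ?thesis using c s1 wr_pos[OF s1, of t] by simp
  qed
  have cpos: "cos t > 0" if "t \<in> {0<..<pi/2}" for t
    using that by (auto intro!: cos_gt_zero_pi)
  have contw: "continuous_on {0..pi/2} (\<lambda>t. sqrt 2 / sqrt (wr s t))"
    using wr_pos[OF s1] unfolding wr_def
    by (intro continuous_intros) (auto, metis less_irrefl)
  have nn1: "0 \<le> sqrt 2 / sqrt (wr s t)" for t
    using wr_pos[OF s1, of t] by simp
  have nn2: "0 \<le> (2 + 2 * s) * (sin t)^2 * sqrt 2 / sqrt (wr s t)" for t
    using wr_pos[OF s1, of t] s1 by (intro divide_nonneg_nonneg mult_nonneg_nonneg) auto
  show "((\<lambda>x. 1 / sqrt (E - V x)) has_integral Jr (sqrt E)) {xminus E..xplus E}"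
    unfolding Jr_def s_def[symmetric] ga[symmetric] gb[symmetric]
  proof (rule subst_HK[where g'=g'])
    show "(\<lambda>x. 1 / sqrt (E - V x)) \<in> borel_measurable borel" by measurable
    show "continuous_on {0..pi / 2} (\<lambda>t. sqrt 2 / sqrt (wr s t))" by (rule contw)
    fix t :: real assume t: "t \<in> {0<..<pi/2}"
    show "1 / sqrt (E - V (g t)) * g' t = sqrt 2 / sqrt (wr s t)"
      using eqc[OF t] cpos[OF t] s1 wr_pos[OF s1, of t] unfolding g'_def xp by (simp add: field_simps)
  qed (use derivg contg' g'0 wr_pos[OF s1] nn1 nn2 V_le[of E] E in \<open>auto simp: ga[simplified] gb[simplified]\<close>)
  show "((\<lambda>x. x^2 / sqrt (E - V x)) has_integral Kr (sqrt E)) {xminus E..xplus E}"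
    unfolding Kr_def s_def[symmetric] ga[symmetric] gb[symmetric]
  proof (rule subst_HK[where g'=g'])
    show "(\<lambda>x. x^2 / sqrt (E - V x)) \<in> borel_measurable borel" by measurable
    show "continuous_on {0..pi / 2} (\<lambda>t. (2 + 2 * s) * (sin t)^2 * sqrt 2 / sqrt (wr s t))"
      using wr_pos[OF s1] unfolding wr_def
      by (intro continuous_intros) (auto, metis less_irrefl)
    fix t :: real assume t: "t \<in> {0<..<pi/2}"
    show "(g t)^2 / sqrt (E - V (g t)) * g' t = (2 + 2 * s) * (sin t)^2 * sqrt 2 / sqrt (wr s t)"
      using eqc[OF t] cpos[OF t] s1 wr_pos[OF s1, of t] xp2 unfolding g'_def g_def
      by (simp add: field_simps power_mult_distrib xp)
  qed (use derivg contg' g'0 wr_pos[OF s1] s1 nn2 V_le[of E] E in \<open>auto simp: ga[simplified] gb[simplified]\<close>)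
qed

lemma posl: "\<bar>s\<bar> < 1 \<Longrightarrow> 2 + 2 * s * sin t > (0::real)"
proof -
  assume a: "\<bar>s\<bar> < 1"
  have "\<bar>s * sin t\<bar> \<le> \<bar>s\<bar>" using abs_sin_le_one[of t]
    by (simp add: abs_mult mult_left_le)
  then show ?thesis using a by linarith
qed

lemma Jl_integrable: "\<bar>s\<bar> < 1 \<Longrightarrow> (\<lambda>t. 1 / sqrt (2 + 2 * s * sin t)) integrable_on {a..b}"
  using posl[of s] by (intro integrable_continuous_interval continuous_intros) (auto, metis less_irrefl)

lemma Kl_integrable: "(\<lambda>t. sqrt (2 + 2 * s * sin t)) integrable_on {a..b}"
  by (intro integrable_continuous_interval continuous_intros)

lemma Jl_pos: assumes "\<bar>s\<bar> < 1" shows "Jl s \<ge> pi/2"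
proof -
  have "((\<lambda>t. 1/2) has_integral pi/2) {-pi/2..pi/2}"
    using has_integral_const_real[of "1/2::real" "-pi/2" "pi/2"] by simp
  moreover have "((\<lambda>t. 1 / sqrt (2 + 2 * s * sin t)) has_integral Jl s) {-pi/2..pi/2}"
    unfolding Jl_def using Jl_integrable[OF assms] by (simp add: integrable_integral)
  moreover have "1/2 \<le> 1 / sqrt (2 + 2 * s * sin t)" for t
  proof -
    have p: "2 + 2 * s * sin t > 0" using posl[OF assms] .
    have "\<bar>s * sin t\<bar> \<le> 1" using assms abs_sin_le_one[of t]
      by (simp add: abs_mult mult_le_one)
    then have "2 + 2 * s * sin t \<le> 4" by linarith
    then have "sqrt (2 + 2 * s * sin t) \<le> sqrt 4" by (rule real_sqrt_le_mono)
    then have "sqrt (2 + 2 * s * sin t) \<le> 2" by simp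
    then show ?thesis using p by (intro divide_left_mono) auto
  qed
  ultimately show ?thesis by (rule has_integral_le)
qed

lemma Kl_bounds: assumes "\<bar>s\<bar> \<le> 1" shows "Kl s \<ge> 0" "Kl s \<le> 2 * pi"
proof -
  have h: "((\<lambda>t. sqrt (2 + 2 * s * sin t)) has_integral Kl s) {-pi/2..pi/2}"
    unfolding Kl_def using Kl_integrable by (simp add: integrable_integral)
  have b: "\<bar>s * sin t\<bar> \<le> 1" for t
    using assms abs_sin_le_one[of t] by (simp add: abs_mult mult_le_one)
  have nn: "0 \<le> 2 + 2 * s * sin t" for t using b[of t] unfolding abs_le_iff by linarith
  show "Kl s \<ge> 0" using h by (rule has_integral_nonneg) (simp add: nn)
  have "((\<lambda>t. 2) has_integral 2 * pi) {-pi/2..pi/2}"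
    using has_integral_const_real[of "2::real" "-pi/2" "pi/2"] by (simp add: mult.commute)
  moreover have "sqrt (2 + 2 * s * sin t) \<le> 2" for t
  proof -
    have "2 + 2 * s * sin t \<le> 4" using b[of t] by linarith
    then have "sqrt (2 + 2 * s * sin t) \<le> sqrt 4" by (rule real_sqrt_le_mono)
    then show ?thesis by simp
  qed
  ultimately show "Kl s \<le> 2 * pi" using h by (intro has_integral_le[OF h]) auto
qed

lemma log_int:
  fixes c a :: real
  assumes c: "c > 0"
  shows "((\<lambda>t. 1 / (c + (t - a))) has_integral (ln (c + 1) - ln c)) {a..a+1}"
proof -
  have "((\<lambda>t. 1 / (c + (t - a))) has_integral (ln (c + ((a+1) - a)) - ln (c + (a - a)))) {a..a+1}"
  proof (rule fundamental_theorem_of_calculus)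
    fix x assume x: "x \<in> {a..a+1}"
    then have "c + (x - a) > 0" using c by auto
    then have "((\<lambda>t. ln (c + (t - a))) has_real_derivative 1 / (c + (x - a))) (at x)"
      by (auto intro!: derivative_eq_intros)
    then show "((\<lambda>t. ln (c + (t - a))) has_vector_derivative 1 / (c + (x - a))) (at x within {a..a+1})"
      by (simp add: has_real_derivative_iff_has_vector_derivative has_vector_derivative_at_within)
  qed simp
  then show ?thesis by simp
qed

lemma one_minus_cos: "1 - cos u \<le> u^2 / (2::real)"
proof -
  have "cos u = cos (2 * (u/2))" by simp
  also have "\<dots> = 1 - 2 * (sin (u/2))^2" by (rule cos_double_sin)
  finally have "1 - cos u = 2 * (sin (u/2))^2" by simp
  also have "(sin (u/2))^2 \<le> (u/2)^2"
    using abs_sin_x_le_abs_x[of "u/2"] by (metis abs_le_square_iff)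
  finally show ?thesis by (simp add: power_divide)
qed

lemma Jl_lower:
  assumes s: "0 \<le> s" "s < 1"
  defines "c \<equiv> sqrt (2 * (1 - s))"
  shows "Jl s \<ge> ln (c + 1) - ln c"
proof -
  have c0: "c > 0" unfolding c_def using s by simp
  have as: "\<bar>s\<bar> < 1" using s by simp
  have pi1: "-pi/2 + 1 \<le> pi/2" using pi_gt3 by simp
  have "ln (c + 1) - ln c \<le> integral {-pi/2..-pi/2+1} (\<lambda>t. 1 / sqrt (2 + 2 * s * sin t))"
  proof (rule has_integral_le[OF log_int[OF c0, of "-pi/2"]])
    show "((\<lambda>t. 1 / sqrt (2 + 2 * s * sin t)) has_integral integral {-pi/2..-pi/2+1} (\<lambda>t. 1 / sqrt (2 + 2 * s * sin t))) {-pi/2..-pi/2+1}"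
      using Jl_integrable[OF as] by (simp add: integrable_integral)
    fix t assume t: "t \<in> {-pi/2..-pi/2+1}"
    define u where "u = t + pi/2"
    have u: "0 \<le> u" "u \<le> 1" using t u_def by auto
    have st: "sin t = - cos u" unfolding u_def by (simp add: cos_add)
    have p: "2 + 2 * s * sin t > 0" using posl[OF as] .
    have "2 + 2 * s * sin t = c^2 + 2 * s * (1 - cos u)"
      unfolding st c_def using s by (simp add: algebra_simps)
    also have "\<dots> \<le> c^2 + 2 * (1 - cos u)"
    proof -
      have "s * (1 - cos u) \<le> 1 - cos u" using s cos_le_one[of u] by (intro mult_left_le_one_le) auto
      then show ?thesis by (simp add: mult.assoc)
    qed
    also have "\<dots> \<le> c^2 + u^2" using one_minus_cos[of u] by simp
    also have "\<dots> \<le> (c + u)^2" using c0 u by (simp add: power2_sum)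
    finally have "sqrt (2 + 2 * s * sin t) \<le> sqrt ((c + u)^2)"
      by (rule real_sqrt_le_mono)
    then have "sqrt (2 + 2 * s * sin t) \<le> c + u" using c0 u by simp
    then have "1 / (c + u) \<le> 1 / sqrt (2 + 2 * s * sin t)"
      using p c0 u by (intro divide_left_mono) auto
    then show "1 / (c + (t - - pi / 2)) \<le> 1 / sqrt (2 + 2 * s * sin t)"
      unfolding u_def by simp
  qed
  also have "\<dots> \<le> Jl s" unfolding Jl_def
  proof (rule integral_subset_le)
    show "{- pi / 2..- pi / 2 + 1} \<subseteq> {- pi / 2..pi / 2}" using pi1 by auto
    show "\<forall>x\<in>{- pi / 2..pi / 2}. 0 \<le> 1 / sqrt (2 + 2 * s * sin x)"
      using posl[OF as] by (auto intro: less_imp_le)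
  qed (use Jl_integrable[OF as] in auto)
  finally show ?thesis .
qed

lemma Jr_integrable: "s > 1 \<Longrightarrow> (\<lambda>t. sqrt 2 / sqrt (wr s t)) integrable_on {a..b}"
  using wr_pos[of s] unfolding wr_def
  by (intro integrable_continuous_interval continuous_intros) (auto, metis less_irrefl)

lemma Kr_integrable: "s > 1 \<Longrightarrow> (\<lambda>t. (2 + 2 * s) * (sin t)^2 * sqrt 2 / sqrt (wr s t)) integrable_on {a..b}"
  using wr_pos[of s] unfolding wr_def
  by (intro integrable_continuous_interval continuous_intros) (auto, metis less_irrefl)

lemma Jr_pos: assumes s: "s > 1" shows "Jr s > 0"
proof -
  have "((\<lambda>t. 1 / sqrt s) has_integral (pi/2) * (1 / sqrt s)) {0..pi/2}"
    using has_integral_const_real[of "1 / sqrt s" 0 "pi/2"] by simp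
  moreover have "((\<lambda>t. sqrt 2 / sqrt (wr s t)) has_integral Jr s) {0..pi/2}"
    unfolding Jr_def using Jr_integrable[OF s] by (simp add: integrable_integral)
  moreover have "1 / sqrt s \<le> sqrt 2 / sqrt (wr s t)" for t
  proof -
    have w: "wr s t > 0" using wr_pos[OF s] .
    have "(sin t)^2 \<le> 1" by (simp add: abs_square_le_1)
    then have "(1 + s) * (sin t)^2 \<le> 1 + s" using s by (intro mult_left_le) auto
    then have "wr s t \<le> 2 * s" unfolding wr_def by linarith
    then have "sqrt (wr s t) \<le> sqrt (2 * s)" by (rule real_sqrt_le_mono)
    then have "sqrt (wr s t) \<le> sqrt 2 * sqrt s" by (simp add: real_sqrt_mult)
    then have "sqrt (wr s t) / sqrt 2 \<le> sqrt s" by (simp add: divide_le_eq mult.commute)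
    then have "1 / sqrt s \<le> 1 / (sqrt (wr s t) / sqrt 2)"
      using w s by (intro divide_left_mono) auto
    then show ?thesis by simp
  qed
  ultimately have "(pi/2) * (1 / sqrt s) \<le> Jr s" by (rule has_integral_le)
  moreover have "(pi/2) * (1 / sqrt s) > 0" using s by simp
  ultimately show ?thesis by linarith
qed

lemma Kr_bounds: assumes s: "1 < s" "s < 3" shows "Kr s \<ge> 0" "Kr s \<le> 3 * pi"
proof -
  have h: "((\<lambda>t. (2 + 2 * s) * (sin t)^2 * sqrt 2 / sqrt (wr s t)) has_integral Kr s) {0..pi/2}"
    unfolding Kr_def using Kr_integrable[OF s(1)] by (simp add: integrable_integral)
  have nn: "0 \<le> (2 + 2 * s) * (sin t)^2 * sqrt 2 / sqrt (wr s t)" for t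
    using wr_pos[OF s(1), of t] s by (intro divide_nonneg_nonneg mult_nonneg_nonneg) auto
  show "Kr s \<ge> 0" using h by (rule has_integral_nonneg) (simp add: nn)
  have "((\<lambda>t. 6) has_integral 3 * pi) {0..pi/2}"
    using has_integral_const_real[of "6::real" 0 "pi/2"] by (simp add: mult.commute)
  moreover have "(2 + 2 * s) * (sin t)^2 * sqrt 2 / sqrt (wr s t) \<le> 6" for t
  proof -
    define a where "a = sqrt (1 + s) * \<bar>sin t\<bar>"
    have a0: "a \<ge> 0" unfolding a_def using s by simp
    have a2: "a^2 = (1 + s) * (sin t)^2" unfolding a_def using s by (simp add: power_mult_distrib)
    have "a^2 \<le> wr s t" unfolding a2 wr_def using s by simp
    then have "sqrt (a^2) \<le> sqrt (wr s t)" by (rule real_sqrt_le_mono)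
    then have asq: "a \<le> sqrt (wr s t)" using a0 by simp
    have num: "(2 + 2 * s) * (sin t)^2 * sqrt 2 = 2 * sqrt 2 * a^2" unfolding a2 by simp
    have a_le: "a \<le> sqrt (1 + s)" unfolding a_def using abs_sin_le_one[of t] s
      by (intro mult_left_le) auto
    show ?thesis
    proof (cases "a = 0")
      case True then show ?thesis unfolding num by simp
    next
      case False
      then have ap: "a > 0" using a0 by simp
      have "2 * sqrt 2 * a^2 / sqrt (wr s t) \<le> 2 * sqrt 2 * a^2 / a"
        using ap asq wr_pos[OF s(1), of t] by (intro divide_left_mono) (auto intro!: mult_pos_pos)
      also have "\<dots> = 2 * sqrt 2 * a" using ap by (simp add: power2_eq_square)
      also have "\<dots> \<le> 2 * sqrt 2 * sqrt (1 + s)" using a_le by simp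
      also have "\<dots> = 2 * sqrt (2 + 2 * s)" by (simp add: real_sqrt_mult[symmetric] algebra_simps)
      also have "\<dots> \<le> 6"
      proof -
        have "sqrt (2 + 2 * s) \<le> sqrt (3^2)" by (rule real_sqrt_le_mono) (use s in simp)
        then show ?thesis by simp
      qed
      finally show ?thesis unfolding num .
    qed
  qed
  ultimately show "Kr s \<le> 3 * pi" using h by (intro has_integral_le[OF h]) auto
qed

lemma Jr_lower:
  assumes s: "1 < s" "s < 2"
  defines "c \<equiv> sqrt (s - 1)"
  shows "Jr s \<ge> (ln (c + 1) - ln c) / 2"
proof -
  have c0: "c > 0" unfolding c_def using s by simp
  have pi1: "1 \<le> pi/2" using pi_gt3 by simp
  have hl: "((\<lambda>t. (1/2) * (1 / (c + (t - 0)))) has_integral (1/2) * (ln (c + 1) - ln c)) {0..0+1}"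
    using has_integral_mult_right[OF log_int[OF c0, of 0], of "1/2"] by simp
  have "(1/2) * (ln (c + 1) - ln c) \<le> integral {0..1} (\<lambda>t. sqrt 2 / sqrt (wr s t))"
  proof (rule has_integral_le[OF hl])
    show "((\<lambda>t. sqrt 2 / sqrt (wr s t)) has_integral integral {0..1} (\<lambda>t. sqrt 2 / sqrt (wr s t))) {0..0+1}"
      using Jr_integrable[OF s(1)] by (simp add: integrable_integral)
    fix t :: real assume t: "t \<in> {0..0+1}"
    then have t0: "0 \<le> t" by simp
    have w: "wr s t > 0" using wr_pos[OF s(1)] .
    have "(sin t)^2 \<le> t^2" using abs_sin_x_le_abs_x[of t] by (metis abs_le_square_iff)
    then have "(1 + s) * (sin t)^2 \<le> 3 * t^2"
      using s by (intro mult_mono) auto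
    then have "wr s t \<le> c^2 + 3 * t^2" unfolding wr_def c_def using s by simp
    also have "\<dots> \<le> (2 * (c + t))^2" using c0 t0 by (simp add: power2_eq_square algebra_simps)
    finally have "sqrt (wr s t) \<le> sqrt ((2 * (c + t))^2)" by (rule real_sqrt_le_mono)
    then have sq: "sqrt (wr s t) \<le> 2 * (c + t)" using c0 t0 by simp
    have "1 / (2 * (c + t)) \<le> 1 / sqrt (wr s t)"
      using sq w c0 t0 by (intro divide_left_mono) auto
    also have "\<dots> \<le> sqrt 2 / sqrt (wr s t)" using w by (intro divide_right_mono) auto
    finally show "(1/2) * (1 / (c + (t - 0))) \<le> sqrt 2 / sqrt (wr s t)" by simp
  qed
  also have "\<dots> \<le> Jr s" unfolding Jr_def
  proof (rule integral_subset_le)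
    show "{0..1} \<subseteq> {0..pi / 2}" using pi1 by auto
    show "\<forall>x\<in>{0..pi / 2}. 0 \<le> sqrt 2 / sqrt (wr s x)"
      using wr_pos[OF s(1)] by (auto intro: less_imp_le)
  qed (use Jr_integrable[OF s(1)] in auto)
  finally show ?thesis by simp
qed


definition P :: "real \<Rightarrow> real" where
  "P E = (if E < 1 then 2 - Kl (sqrt E) / Jl (sqrt E) else if E = 1 then 2
          else 2 - Kr (sqrt E) / Jr (sqrt E))"

lemma Ffun_split:
  assumes h1: "((\<lambda>x. 1 / sqrt (E - V x)) has_integral J) {a..b}"
    and h2: "((\<lambda>x. x^2 / sqrt (E - V x)) has_integral K) {a..b}"
  shows "integral {a..b} (\<lambda>x. (2 - x^2) / sqrt (E - V x)) = 2 * J - K"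
proof -
  have "((\<lambda>x. 2 * (1 / sqrt (E - V x)) - x^2 / sqrt (E - V x)) has_integral 2 * J - K) {a..b}"
    by (intro has_integral_diff has_integral_mult_right h1 h2)
  then have "((\<lambda>x. (2 - x^2) / sqrt (E - V x)) has_integral 2 * J - K) {a..b}"
    by (simp add: diff_divide_distrib)
  then show ?thesis by (rule integral_unique)
qed

lemma Phi_eq: assumes E: "E \<ge> 0" shows "Phi E = P E"
proof (cases "E = 0")
  case True
  have "((\<lambda>t. sqrt (2 + 2 * 0 * sin t)) has_integral pi * sqrt 2) {-pi/2..pi/2}"
    using has_integral_const_real[of "sqrt 2" "-pi/2" "pi/2"] by simp
  then have k: "Kl 0 = pi * sqrt 2" unfolding Kl_def by (rule integral_unique)
  have "((\<lambda>t. 1 / sqrt (2 + 2 * 0 * sin t)) has_integral pi * (1 / sqrt 2)) {-pi/2..pi/2}"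
    using has_integral_const_real[of "1 / sqrt 2" "-pi/2" "pi/2"] by simp
  then have j: "Jl 0 = pi * (1 / sqrt 2)" unfolding Jl_def by (rule integral_unique)
  have "Kl 0 / Jl 0 = 2" unfolding k j by (simp add: field_simps)
  then show ?thesis using True unfolding Phi_def P_def by simp
next
  case E0: False
  show ?thesis
  proof (cases "E < 1")
    case True
    have E': "0 < E" "E < 1" using E E0 True by auto
    note h = left_case[OF E']
    have J: "Jl (sqrt E) \<ge> pi/2" using Jl_pos[of "sqrt E"] E' by simp
    have cf: "Cfun E = inverse (Jl (sqrt E))" unfolding Cfun_def using integral_unique[OF h(1)] by simp
    have ff: "Ffun E = 2 * Jl (sqrt E) - Kl (sqrt E)" unfolding Ffun_def by (rule Ffun_split[OF h])
    have "Phi E = inverse (Jl (sqrt E)) * (2 * Jl (sqrt E) - Kl (sqrt E))"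
      using True E0 unfolding Phi_def cf ff by simp
    also have "\<dots> = P E" using True J pi_gt3 unfolding P_def by (simp add: field_simps)
    finally show ?thesis .
  next
    case False
    show ?thesis
    proof (cases "E = 1")
      case True then show ?thesis unfolding Phi_def P_def by simp
    next
      case False
      have E': "1 < E" using False \<open>\<not> E < 1\<close> by simp
      note h = right_case[OF E']
      have J: "Jr (sqrt E) > 0" using Jr_pos[of "sqrt E"] E' by simp
      have cf: "Cfun E = inverse (Jr (sqrt E))" unfolding Cfun_def using integral_unique[OF h(1)] by simp
      have ff: "Ffun E = 2 * Jr (sqrt E) - Kr (sqrt E)" unfolding Ffun_def by (rule Ffun_split[OF h])
      have "Phi E = inverse (Jr (sqrt E)) * (2 * Jr (sqrt E) - Kr (sqrt E))"
        using E' unfolding Phi_def cf ff by simp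
      also have "\<dots> = P E" using E' J unfolding P_def by (simp add: field_simps)
      finally show ?thesis .
    qed
  qed
qed

lemma Jl_cont: "continuous_on {-1<..<1} Jl"
proof -
  have "continuous_on {-1<..<1} (\<lambda>s. integral (cbox (-pi/2) (pi/2)) (\<lambda>t. 1 / sqrt (2 + 2 * s * sin t)))"
  proof (rule integral_continuous_on_param)
    have "\<forall>z\<in>{-1<..<1} \<times> cbox (-pi/2) (pi/2). 2 + 2 * fst z * sin (snd z) > 0"
      by (auto intro!: posl simp: abs_less_iff)
    then have "\<forall>z\<in>{-1<..<1} \<times> cbox (-pi/2) (pi/2). sqrt (2 + 2 * fst z * sin (snd z)) \<noteq> 0"
      by (metis less_irrefl real_sqrt_eq_zero_cancel_iff)
    then have "continuous_on ({-1<..<1} \<times> cbox (-pi/2) (pi/2)) (\<lambda>z. 1 / sqrt (2 + 2 * fst z * sin (snd z)))"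
      by (intro continuous_intros) auto
    then show "continuous_on ({-1<..<1} \<times> cbox (-pi/2) (pi/2)) (\<lambda>(s, t). 1 / sqrt (2 + 2 * s * sin t))"
      by (simp add: case_prod_beta')
  qed
  then show ?thesis unfolding Jl_def by simp
qed

lemma Kl_cont: "continuous_on {-1<..<1} Kl"
proof -
  have "continuous_on {-1<..<1} (\<lambda>s. integral (cbox (-pi/2) (pi/2)) (\<lambda>t. sqrt (2 + 2 * s * sin t)))"
  proof (rule integral_continuous_on_param)
    have "continuous_on ({-1<..<1} \<times> cbox (-pi/2) (pi/2)) (\<lambda>z. sqrt (2 + 2 * fst z * sin (snd z)))"
      by (intro continuous_intros)
    then show "continuous_on ({-1<..<1} \<times> cbox (-pi/2) (pi/2)) (\<lambda>(s, t). sqrt (2 + 2 * s * sin t))"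
      by (simp add: case_prod_beta')
  qed
  then show ?thesis unfolding Kl_def by simp
qed

lemma Jr_cont: "continuous_on {1<..} Jr"
proof -
  have "continuous_on {1<..} (\<lambda>s. integral (cbox 0 (pi/2)) (\<lambda>t. sqrt 2 / sqrt (wr s t)))"
  proof (rule integral_continuous_on_param)
    have "\<forall>z\<in>{1<..} \<times> cbox 0 (pi/2). sqrt (wr (fst z) (snd z)) \<noteq> 0"
      using wr_pos by (auto, metis less_irrefl wr_pos)
    then have "continuous_on ({1<..} \<times> cbox 0 (pi/2)) (\<lambda>z. sqrt 2 / sqrt (fst z - 1 + (1 + fst z) * (sin (snd z))^2))"
      unfolding wr_def by (intro continuous_intros) auto
    then show "continuous_on ({1<..} \<times> cbox 0 (pi/2)) (\<lambda>(s, t). sqrt 2 / sqrt (wr s t))"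
      by (simp add: case_prod_beta' wr_def)
  qed
  then show ?thesis unfolding Jr_def by simp
qed

lemma Kr_cont: "continuous_on {1<..} Kr"
proof -
  have "continuous_on {1<..} (\<lambda>s. integral (cbox 0 (pi/2)) (\<lambda>t. (2 + 2 * s) * (sin t)^2 * sqrt 2 / sqrt (wr s t)))"
  proof (rule integral_continuous_on_param)
    have "\<forall>z\<in>{1<..} \<times> cbox 0 (pi/2). sqrt (wr (fst z) (snd z)) \<noteq> 0"
      using wr_pos by (auto, metis less_irrefl wr_pos)
    then have "continuous_on ({1<..} \<times> cbox 0 (pi/2)) (\<lambda>z. (2 + 2 * fst z) * (sin (snd z))^2 * sqrt 2 / sqrt (fst z - 1 + (1 + fst z) * (sin (snd z))^2))"
      unfolding wr_def by (intro continuous_intros) auto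
    then show "continuous_on ({1<..} \<times> cbox 0 (pi/2)) (\<lambda>(s, t). (2 + 2 * s) * (sin t)^2 * sqrt 2 / sqrt (wr s t))"
      by (simp add: case_prod_beta' wr_def)
  qed
  then show ?thesis unfolding Kr_def by simp
qed


lemma ratio_bound:
  fixes K J B L :: real
  assumes "0 \<le> K" "K \<le> B" "0 < L" "L \<le> J"
  shows "norm (K / J) \<le> B / L"
proof -
  have "J > 0" using assms by linarith
  then have "norm (K / J) = K / J" using assms by simp
  also have "\<dots> \<le> B / L" using assms by (intro frac_le) auto
  finally show ?thesis .
qed

lemma lim_left: "(P \<longlongrightarrow> 2) (at_left 1)"
proof -
  define g where "g E = 2 * pi / (ln (sqrt (2 * (1 - sqrt E)) + 1) - ln (sqrt (2 * (1 - sqrt E))))" for E :: real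
  have g0: "(g \<longlongrightarrow> 0) (at_left 1)" unfolding g_def by real_asymp
  have "eventually (\<lambda>E. norm (Kl (sqrt E) / Jl (sqrt E)) \<le> g E) (at_left 1)"
    using eventually_at_left_real[OF zero_less_one]
  proof (rule eventually_mono)
    fix E :: real assume E: "E \<in> {0<..<1}"
    define s where "s = sqrt E"
    define c where "c = sqrt (2 * (1 - s))"
    have s: "0 \<le> s" "s < 1" using E unfolding s_def by auto
    have c0: "c > 0" unfolding c_def using s by simp
    have L: "0 < ln (c + 1) - ln c" using c0 by simp
    show "norm (Kl (sqrt E) / Jl (sqrt E)) \<le> g E"
      unfolding g_def s_def[symmetric] c_def[symmetric]
      using Kl_bounds[of s] Jl_lower[OF s] L s unfolding c_def[symmetric]
      by (intro ratio_bound) auto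
  qed
  then have "((\<lambda>E. Kl (sqrt E) / Jl (sqrt E)) \<longlongrightarrow> 0) (at_left 1)"
    by (rule Lim_null_comparison) (rule g0)
  then have "((\<lambda>E. 2 - Kl (sqrt E) / Jl (sqrt E)) \<longlongrightarrow> 2 - 0) (at_left 1)"
    by (intro tendsto_diff tendsto_const)
  then have "((\<lambda>E. 2 - Kl (sqrt E) / Jl (sqrt E)) \<longlongrightarrow> 2) (at_left 1)" by simp
  moreover have "eventually (\<lambda>E. 2 - Kl (sqrt E) / Jl (sqrt E) = P E) (at_left 1)"
    using eventually_at_left_real[OF zero_less_one] by eventually_elim (simp add: P_def)
  ultimately show ?thesis by (rule Lim_transform_eventually)
qed

lemma lim_right: "(P \<longlongrightarrow> 2) (at_right 1)"
proof -
  define g where "g E = 3 * pi / ((ln (sqrt (sqrt E - 1) + 1) - ln (sqrt (sqrt E - 1))) / 2)" for E :: real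
  have g0: "(g \<longlongrightarrow> 0) (at_right 1)" unfolding g_def by real_asymp
  have ev4: "eventually (\<lambda>x. x \<in> {1<..<4::real}) (at_right 1)"
    by (rule eventually_at_right_real) simp
  have "eventually (\<lambda>E. norm (Kr (sqrt E) / Jr (sqrt E)) \<le> g E) (at_right 1)"
    using ev4
  proof (rule eventually_mono)
    fix E :: real assume E: "E \<in> {1<..<4}"
    define s where "s = sqrt E"
    define c where "c = sqrt (s - 1)"
    have s: "1 < s" "s < 2" using E real_sqrt_less_mono[of E 4] unfolding s_def by auto
    have c0: "c > 0" unfolding c_def using s by simp
    have L: "0 < (ln (c + 1) - ln c) / 2" using c0 by simp
    show "norm (Kr (sqrt E) / Jr (sqrt E)) \<le> g E"
      unfolding g_def s_def[symmetric] c_def[symmetric]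
      using Kr_bounds[of s] Jr_lower[OF s] L s unfolding c_def[symmetric]
      by (intro ratio_bound) auto
  qed
  then have "((\<lambda>E. Kr (sqrt E) / Jr (sqrt E)) \<longlongrightarrow> 0) (at_right 1)"
    by (rule Lim_null_comparison) (rule g0)
  then have "((\<lambda>E. 2 - Kr (sqrt E) / Jr (sqrt E)) \<longlongrightarrow> 2 - 0) (at_right 1)"
    by (intro tendsto_diff tendsto_const)
  then have "((\<lambda>E. 2 - Kr (sqrt E) / Jr (sqrt E)) \<longlongrightarrow> 2) (at_right 1)" by simp
  moreover have "eventually (\<lambda>E. 2 - Kr (sqrt E) / Jr (sqrt E) = P E) (at_right 1)"
    using ev4 by eventually_elim (simp add: P_def)
  ultimately show ?thesis by (rule Lim_transform_eventually)
qed

lemma P_cont_left: "continuous_on {-1<..<1} P"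
proof -
  have sq: "sqrt ` {-1<..<1} \<subseteq> {-1<..<1::real}"
  proof
    fix y assume "y \<in> sqrt ` {-1<..<1::real}"
    then obtain E where E: "E \<in> {-1<..<1}" and y: "y = sqrt E" by auto
    have "sqrt (-1) < sqrt E" using E by (intro real_sqrt_less_mono) auto
    then have "-1 < sqrt E" by (simp add: real_sqrt_minus)
    moreover have "sqrt E < 1" using E by simp
    ultimately show "y \<in> {-1<..<1}" using y by simp
  qed
  have J: "continuous_on {-1<..<1} (\<lambda>E. Jl (sqrt E))"
    by (rule continuous_on_compose2[OF Jl_cont _ sq]) (intro continuous_intros)
  have K: "continuous_on {-1<..<1} (\<lambda>E. Kl (sqrt E))"
    by (rule continuous_on_compose2[OF Kl_cont _ sq]) (intro continuous_intros)
  have nz: "Jl (sqrt E) \<noteq> 0" if "E \<in> {-1<..<1}" for E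
  proof -
    have "sqrt E \<in> {-1<..<1}" using sq that by blast
    then have "\<bar>sqrt E\<bar> < 1" by (simp add: abs_less_iff)
    then show ?thesis using Jl_pos[of "sqrt E"] pi_gt3 by linarith
  qed
  have "continuous_on {-1<..<1} (\<lambda>E. 2 - Kl (sqrt E) / Jl (sqrt E))"
    using J K nz by (intro continuous_intros) auto
  then show ?thesis by (rule continuous_on_cong[THEN iffD1, rotated 2]) (auto simp: P_def)
qed

lemma P_cont_right: "continuous_on {1<..} P"
proof -
  have sq: "sqrt ` {1<..} \<subseteq> ({1<..} :: real set)" by auto
  have J: "continuous_on {1<..} (\<lambda>E. Jr (sqrt E))"
    by (rule continuous_on_compose2[OF Jr_cont _ sq]) (intro continuous_intros)
  have K: "continuous_on {1<..} (\<lambda>E. Kr (sqrt E))"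
    by (rule continuous_on_compose2[OF Kr_cont _ sq]) (intro continuous_intros)
  have nz: "Jr (sqrt E) \<noteq> 0" if "E \<in> {1<..}" for E
    using Jr_pos[of "sqrt E"] that by auto
  have "continuous_on {1<..} (\<lambda>E. 2 - Kr (sqrt E) / Jr (sqrt E))"
    using J K nz by (intro continuous_intros) auto
  then show ?thesis by (rule continuous_on_cong[THEN iffD1, rotated 2]) (auto simp: P_def)
qed

lemma P_isCont: assumes x0: "x \<ge> 0" shows "isCont P x"
proof -
  consider (a) "x < 1" | (b) "x = 1" | (c) "x > 1" by linarith
  then show ?thesis
  proof cases
    case a
    then have "x \<in> {-1<..<1}" using x0 by simp
    then show ?thesis using P_cont_left continuous_on_eq_continuous_at[OF open_greaterThanLessThan] by blast
  next
    case c
    then have "x \<in> {1<..}" by simp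
    then show ?thesis using P_cont_right continuous_on_eq_continuous_at[OF open_greaterThan] by blast
  next
    case b
    have P1: "P 1 = 2" by (simp add: P_def)
    have l: "continuous (at_left 1) P" unfolding continuous_within P1 by (rule lim_left)
    have r: "continuous (at_right 1) P" unfolding continuous_within P1 by (rule lim_right)
    show ?thesis unfolding b using l r continuous_at_split by blast
  qed
qed

theorem corollary3p10:
  shows "continuous_on {0..} Phi"
proof -
  have "continuous_on {0..} P"
    by (rule continuous_at_imp_continuous_on) (auto intro: P_isCont)
  then show ?thesis by (rule continuous_on_cong[THEN iffD1, rotated 2]) (auto simp: Phi_eq)
qed

end
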